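(* Let $k$ be a positive integer such that $k+1$ is an odd prime. For every $\mathbf v\in N_k$ there exist $s\in\mathbb{Z}_{k+1}$ and $r\in\mathbb{Z}$ such that, working modulo $k+1$, every coordinate of $s\mathbf v+\mathbf r_k\!\left(\tfrac{r}{k+1}\right)$ lies in $\{1,\ldots,k-1\}$.
   Context: $\mathbb{Z}_{k+1}$ is the integers modulo $k+1$. $N_k:=\{\mathbf v\in\mathbb{Z}_{k+1}^k:\ \mathbf v\neq\mathbf 0 \text{ and } \mathbf v \text{ has at least one zero coordinate}\}$. For $x\in\mathbb{R}$, $\{x\}=x-\lfloor x\rfloor$ is the fractional part, and for $t\in\mathbb{R}$, $\mathbf r_k(t):=\big(\lfloor (k+1)\{t\}\rfloor,\lfloor (k+1)\{2t\}\rfloor,\ldots,\lfloor (k+1)\{kt\}\rfloor\big)\in\{0,\ldots,k\}^k$, reduced modulo $k+1$ when added to elements of $\mathbb{Z}_{k+1}^k$. *)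

theory Defs
  imports Complex_Main "HOL-Computational_Algebra.Primes"
begin

text \<open>Vectors in Z_{k+1}^k are represented as functions v :: nat => int with
  coordinates v 1, ..., v k taken as canonical residues in {0..k}, and v j = 0
  for indices outside {1..k}.\<close>

definition Zvec :: "nat \<Rightarrow> (nat \<Rightarrow> int) set" where
  "Zvec k = {v. (\<forall>j\<in>{1..k}. 0 \<le> v j \<and> v j \<le> int k) \<and> (\<forall>j. j \<notin> {1..k} \<longrightarrow> v j = 0)}"

definition Nset :: "nat \<Rightarrow> (nat \<Rightarrow> int) set" where
  "Nset k = {v \<in> Zvec k. (\<exists>j\<in>{1..k}. v j \<noteq> 0) \<and> (\<exists>j\<in>{1..k}. v j = 0)}"

definition rvec :: "nat \<Rightarrow> real \<Rightarrow> nat \<Rightarrow> int" where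
  "rvec k t j = \<lfloor>(real k + 1) * frac (real j * t)\<rfloor>"

end

theory Submission
  imports Defs "HOL-Number_Theory.Number_Theory" "HOL-Computational_Algebra.Polynomial"
begin

lemma rvec_eq:
  "rvec k (real_of_int r / (real k + 1)) j = (int j * r) mod (int k + 1)"
proof -
  define a where "a = int j * r"
  define b where "b = int k + 1"
  have b0: "b > 0" by (simp add: b_def)
  have e1: "real j * (real_of_int r / (real k + 1)) = real_of_int a / real_of_int b"
    by (simp add: a_def b_def)
  have e2: "(real k + 1) = real_of_int b" by (simp add: b_def)
  have "(real k + 1) * frac (real j * (real_of_int r / (real k + 1)))
        = real_of_int b * (real_of_int a / real_of_int b - real_of_int (a div b))"
    unfolding e1 unfolding e2 frac_def floor_divide_of_int_eq by (rule refl)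
  also have "\<dots> = real_of_int (a - b * (a div b))" using b0 by (simp add: field_simps)
  also have "a - b * (a div b) = a mod b" by (simp add: minus_mult_div_eq_mod)
  hence "real_of_int (a - b * (a div b)) = real_of_int (a mod b)" by (simp only:)
  finally show ?thesis unfolding rvec_def a_def b_def by simp
qed

lemma powsum_zero:
  assumes p: "prime (p::nat)" and e: "0 < e" "e < p - 1"
  shows "[(\<Sum>x\<in>{1..<p}. (int x)^e) = 0] (mod int p)"
proof -
  have p1: "p > 1" using p prime_gt_1_nat by blast
  obtain g where g: "residue_primroot p g" using prime_primitive_root_exists[OF p1 p] by blast
  have cop: "coprime p g" and ordg: "ord p g = p - 1"
    using g p by (auto simp: residue_primroot_def totient_prime)
  have ng: "\<not> [g^e = 1] (mod p)"
  proof
    assume "[g^e = 1] (mod p)"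
    hence "ord p g dvd e" using ord_divides' by simp
    hence "p - 1 \<le> e" using ordg e(1) by (metis dvd_imp_le)
    thus False using e(2) by simp
  qed
  define A where "A = {1..<p}"
  define f where "f x = (g*x) mod p" for x
  have inj: "inj_on f A"
  proof
    fix x y assume "x \<in> A" "y \<in> A" "f x = f y"
    hence "[g*x = g*y] (mod p)" by (simp add: f_def cong_def)
    hence "[x = y] (mod p)" using cop cong_mult_lcancel_nat[of g p x y]
      by (simp add: coprime_commute)
    thus "x = y" using \<open>x \<in> A\<close> \<open>y \<in> A\<close> by (simp add: A_def cong_def)
  qed
  have sub: "f ` A \<subseteq> A"
  proof
    fix y assume "y \<in> f ` A"
    then obtain x where x: "x \<in> A" "y = f x" by blast
    have "y < p" using x p1 by (simp add: f_def)
    moreover have "y \<noteq> 0"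
    proof
      assume "y = 0"
      hence "p dvd g * x" using x by (simp add: f_def dvd_eq_mod_eq_0)
      hence "p dvd g \<or> p dvd x" using p prime_dvd_mult_iff by blast
      moreover have "\<not> p dvd g" using cop p1
        by (metis coprime_absorb_left nat_dvd_1_iff_1 less_irrefl)
      moreover have "\<not> p dvd x" using x by (auto simp: A_def dest: dvd_imp_le)
      ultimately show False by blast
    qed
    ultimately show "y \<in> A" by (simp add: A_def)
  qed
  have img: "f ` A = A" by (rule endo_inj_surj) (use sub inj in \<open>auto simp: A_def\<close>)
  define S where "S = (\<Sum>x\<in>A. (int x)^e)"
  have "S = (\<Sum>x\<in>f ` A. (int x)^e)" using img by (simp add: S_def)
  also have "\<dots> = (\<Sum>x\<in>A. (int (f x))^e)" using inj by (simp add: sum.reindex)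
  finally have S1: "S = (\<Sum>x\<in>A. (int (f x))^e)" .
  have "[(\<Sum>x\<in>A. (int (f x))^e) = (\<Sum>x\<in>A. (int g * int x)^e)] (mod int p)"
  proof (rule cong_sum, rule cong_pow)
    fix x show "[int (f x) = int g * int x] (mod int p)"
      by (simp add: f_def cong_def of_nat_mod)
  qed
  also have "(\<Sum>x\<in>A. (int g * int x)^e) = int g ^ e * S"
    by (simp add: S_def power_mult_distrib sum_distrib_left)
  finally have "[S = int g ^ e * S] (mod int p)" using S1 by simp
  hence "int p dvd (int g ^ e - 1) * S"
    by (metis cong_iff_dvd_diff cong_sym left_diff_distrib' mult_1)
  moreover have "prime (int p)" using p by simp
  moreover have "\<not> int p dvd (int g ^ e - 1)"
    using ng by (metis cong_iff_dvd_diff of_nat_1 of_nat_power cong_int_iff)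
  ultimately have "int p dvd S" using prime_dvd_mult_iff by blast
  thus ?thesis by (simp add: S_def A_def cong_0_iff)
qed

lemma powsum_cases:
  assumes p: "prime (p::nat)" and i: "i \<le> p - 1"
  shows "[(\<Sum>m<p. (int m)^i) = (if i = p - 1 then -1 else 0)] (mod int p)"
proof -
  have p1: "p > 1" using p prime_gt_1_nat by blast
  have split: "{..<p} = insert 0 {1..<p}" using p1 by auto
  show ?thesis
  proof (cases "i = p - 1")
    case True
    have "(\<Sum>m<p. (int m)^i) = (\<Sum>m\<in>{1..<p}. (int m)^i)"
      using True p1 by (simp add: split)
    also have "[\<dots> = (\<Sum>m\<in>{1..<p}. 1)] (mod int p)"
    proof (rule cong_sum)
      fix m assume m: "m \<in> {1..<p}"
      have "\<not> p dvd m" using m by (auto dest: dvd_imp_le)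
      hence "[m ^ (p - 1) = 1] (mod p)" using fermat_theorem p by blast
      thus "[(int m)^i = 1] (mod int p)" using True
        by (metis cong_int_iff of_nat_1 of_nat_power)
    qed
    also have "(\<Sum>m\<in>{1..<p}. 1::int) = int p - 1" using p1 by simp
    also have "[int p - 1 = -1] (mod int p)" by (simp add: cong_def)
    finally show ?thesis using True by simp
  next
    case False
    show ?thesis
    proof (cases "i = 0")
      case True
      thus ?thesis using False by (simp add: cong_def)
    next
      case i0: False
      have "(\<Sum>m<p. (int m)^i) = (\<Sum>m\<in>{1..<p}. (int m)^i)"
        using i0 by (simp add: split)
      also have "[\<dots> = 0] (mod int p)" using powsum_zero[OF p] i0 False i by simp
      finally show ?thesis using False by simp
    qed
  qed
qed

lemma polysum:
  fixes P :: "int poly"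
  assumes p: "prime (p::nat)" and d: "degree P \<le> p - 1"
  shows "[(\<Sum>m<p. poly P (int m)) = - coeff P (p - 1)] (mod int p)"
proof -
  have pe: "poly P x = (\<Sum>i\<le>p-1. coeff P i * x ^ i)" for x :: int
  proof -
    have "poly P x = (\<Sum>i\<le>degree P. coeff P i * x ^ i)" by (rule poly_altdef)
    also have "\<dots> = (\<Sum>i\<le>p-1. coeff P i * x ^ i)"
      by (rule sum.mono_neutral_left) (use d in \<open>auto simp: coeff_eq_0\<close>)
    finally show ?thesis .
  qed
  have "(\<Sum>m<p. poly P (int m)) = (\<Sum>i\<le>p-1. coeff P i * (\<Sum>m<p. (int m)^i))"
    by (simp add: pe sum_distrib_left sum.swap[of _ "{..<p}"])
  also have "[\<dots> = (\<Sum>i\<le>p-1. coeff P i * (if i = p - 1 then -1 else 0))] (mod int p)"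
    by (rule cong_sum, rule cong_scalar_left, rule powsum_cases[OF p]) simp
  also have "(\<Sum>i\<le>p-1. coeff P i * (if i = p - 1 then -1 else 0)) = - coeff P (p - 1)"
    by (simp add: if_distrib[of "\<lambda>x. coeff P _ * x"] sum.delta cong: if_cong)
  finally show ?thesis .
qed

lemma construct:
  fixes k :: nat and v :: "nat \<Rightarrow> int" and m c :: int
  assumes p: "prime (k + 1)" and c: "1 \<le> c" "c \<le> int k"
    and nz: "\<forall>j\<in>{1..k}. (v j - int j * m) mod (int k + 1) \<noteq> 0"
    and nc: "\<forall>j\<in>{1..k}. (v j - int j * m) mod (int k + 1) \<noteq> c"
  shows "\<exists>s\<in>{0..int k}. \<exists>r::int. \<forall>j\<in>{1..k}.
           (s * v j + rvec k (real_of_int r / (real k + 1)) j) mod (int k + 1) \<in> {1..int k - 1}"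
proof -
  define P where "P = int k + 1"
  have "prime (int (k+1))" using p by (simp only: prime_nat_int_transfer)
  hence pP: "prime P" by (simp add: P_def add.commute)
  have P1: "P > 1" using pP prime_gt_1_int by blast
  have "\<not> P dvd c" using c by (auto simp: P_def dest: zdvd_imp_le)
  hence "coprime c P" using prime_imp_coprime[OF pP] coprime_commute by blast
  then obtain ci where ci: "[c * ci = 1] (mod P)" using cong_solve_coprime_int by blast
  define s where "s = (- ci) mod P"
  define r where "r = m * ci"
  have "s < P" "0 \<le> s" using P1 by (simp_all add: s_def)
  hence s: "s \<in> {0..int k}" by (simp add: P_def)
  have "\<forall>j\<in>{1..k}. (s * v j + rvec k (real_of_int r / (real k + 1)) j) mod (int k + 1) \<in> {1..int k - 1}"
  proof
    fix j assume j: "j \<in> {1..k}"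
    define w where "w = v j - int j * m"
    define X where "X = s * v j + rvec k (real_of_int r / (real k + 1)) j"
    have "[X = (- ci) * v j + int j * r] (mod P)"
      unfolding X_def rvec_eq P_def[symmetric] s_def
      by (intro cong_add cong_mult cong_refl) (simp_all add: cong_def)
    hence X: "[X = - ci * w] (mod P)" by (simp add: w_def r_def algebra_simps)
    have cw: "[c * X = - w] (mod P)"
    proof -
      have "[c * X = c * (- ci * w)] (mod P)" by (rule cong_mult[OF cong_refl X])
      moreover have "[c * (- ci * w) = - (1 * w)] (mod P)"
        using cong_mult[OF ci cong_refl[of w]] cong_minus_minus_iff
        by (metis (no_types, lifting) minus_mult_left mult.assoc mult_minus_right)
      ultimately show ?thesis using cong_trans by fastforce
    qed
    have w0: "w mod P \<noteq> 0" using nz j by (simp add: w_def P_def)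
    have wc: "w mod P \<noteq> c" using nc j by (simp add: w_def P_def)
    have "X mod P \<noteq> 0"
    proof
      assume "X mod P = 0"
      hence "[X = 0] (mod P)" by (simp add: cong_def)
      hence "[c * X = 0] (mod P)" using cong_scalar_left by fastforce
      hence "[- w = 0] (mod P)" using cw cong_sym cong_trans by blast
      hence "P dvd w" by (simp add: cong_0_iff)
      hence "w mod P = 0" by simp
      thus False using w0 by simp
    qed
    moreover have "X mod P \<noteq> P - 1"
    proof
      assume "X mod P = P - 1"
      hence "[X = -1] (mod P)" using P1 by (simp add: cong_def zmod_zminus1_eq_if)
      hence "[c * X = c * -1] (mod P)" using cong_scalar_left by fastforce
      hence "[- w = c * -1] (mod P)" using cong_trans[OF cong_sym[OF cw]] by blast
      hence "[- w = - c] (mod P)" by simp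
      hence "[w = c] (mod P)" using cong_minus_minus_iff by blast
      hence "w mod P = c" using c by (simp add: cong_def P_def)
      thus False using wc by simp
    qed
    moreover have "0 \<le> X mod P" "X mod P < P" using P1 by auto
    ultimately have "1 \<le> X mod P \<and> X mod P \<le> P - 2" by linarith
    thus "X mod (int k + 1) \<in> {1..int k - 1}" by (simp add: P_def)
  qed
  thus ?thesis using s by blast
qed

theorem lemma4p2:
  fixes k :: nat and v :: "nat \<Rightarrow> int"
  assumes "k > 0" and "prime (k + 1)" and "odd (k + 1)"
    and "v \<in> Nset k"
  shows "\<exists>s\<in>{0..int k}. \<exists>r::int. \<forall>j\<in>{1..k}.
           (s * v j + rvec k (real_of_int r / (real k + 1)) j) mod (int k + 1) \<in> {1..int k - 1}"
proof (rule ccontr)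
  assume neg: "\<not> ?thesis"
  define p where "p = k + 1"
  define P where "P = int k + 1"
  have Pp: "P = int p" by (simp add: p_def P_def)
  have pp: "prime p" using assms(2) by (simp add: p_def)
  have "prime (int (k+1))" using assms(2) by (simp only: prime_nat_int_transfer)
  hence pP: "prime P" by (simp add: P_def add.commute)
  have P1: "P > 1" using pP prime_gt_1_int by blast
  have ek: "even k" using assms(3) by simp
  have k2: "k \<ge> 2" using ek assms(1) by (metis dvd_imp_le even_zero le_neq_implies_less less_one not_less_eq_eq one_add_one)
  have vr: "\<forall>j\<in>{1..k}. 0 \<le> v j \<and> v j \<le> int k"
    and vA: "\<exists>j\<in>{1..k}. v j = 0" and vB: "\<exists>j\<in>{1..k}. v j \<noteq> 0"
    using assms(4) by (auto simp: Nset_def Zvec_def)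
  obtain a where a: "a \<in> {1..k}" "v a = 0" using vA by blast
  obtain b where b: "b \<in> {1..k}" "v b \<noteq> 0" using vB by blast
  have notdvd: "\<not> P dvd int j" if "j \<in> {1..k}" for j
    using that by (auto simp: P_def dest: zdvd_imp_le)
  have key: "\<exists>j\<in>{1..k}. (v j - int j * m) mod P = c"
    if "1 \<le> c" "c \<le> int k" "\<forall>j\<in>{1..k}. (v j - int j * m) mod P \<noteq> 0" for m c
    using construct[OF assms(2) that(1,2)] that(3) neg unfolding P_def by blast
  define Z where "Z = {m \<in> {..<p}. \<exists>j\<in>{1..k}. (v j - int j * int m) mod P = 0}"
  define Q where "Q = (\<Prod>j\<in>{1..k}. [:v j, - int j:])"
  have polyQ: "poly Q x = (\<Prod>j\<in>{1..k}. v j - int j * x)" for x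
    by (simp add: Q_def poly_prod algebra_simps)
  have nzf: "\<forall>j\<in>{1..k}. [:v j, - int j:] \<noteq> 0" by auto
  have degQ: "degree Q = k"
    unfolding Q_def using degree_prod_eq_sum_degree[OF nzf] by simp
  have "coeff Q k = (\<Prod>j\<in>{1..k}. - int j)"
    using degQ lead_coeff_prod[of "\<lambda>j. [:v j, - int j:]" "{1..k}"] by (simp add: Q_def)
  also have "\<dots> = (\<Prod>j\<in>{1..k}. (-1) * int j)" by simp
  also have "\<dots> = (-1)^k * (\<Prod>j\<in>{1..k}. int j)" unfolding prod.distrib by simp
  also have "\<dots> = fact k" using ek by (simp add: fact_prod)
  finally have lcQ: "coeff Q k = fact k" .
  have "[(\<Sum>m<p. poly Q (int m)) = - coeff Q (p - 1)] (mod int p)"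
    by (rule polysum[OF pp]) (simp add: degQ p_def)
  hence S1: "[(\<Sum>m<p. poly Q (int m)) = - fact k] (mod P)" using lcQ by (simp add: Pp p_def)
  have "[fact (p - 1) = (-1::int)] (mod int p)" using wilson_theorem[OF pp] by simp
  hence fk: "[fact k = (-1::int)] (mod P)" by (simp add: Pp p_def)
  have "[- fact k = (1::int)] (mod P)" using fk cong_minus_minus_iff by force
  with S1 have S2: "[(\<Sum>m<p. poly Q (int m)) = 1] (mod P)" using cong_trans by blast
  have each: "[poly Q (int m) = (if m \<in> Z then 0 else -1)] (mod P)" if m: "m < p" for m
  proof (cases "m \<in> Z")
    case True
    then obtain j where j: "j \<in> {1..k}" "(v j - int j * int m) mod P = 0" by (auto simp: Z_def)
    have "P dvd (v j - int j * int m)" using j by auto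
    hence "P dvd poly Q (int m)" unfolding polyQ using j(1)
      by (meson dvd_prodI finite_atLeastAtMost dvd_trans)
    thus ?thesis using True by (simp add: cong_0_iff)
  next
    case False
    define h where "h j = (v j - int j * int m) mod P" for j
    have h0: "\<forall>j\<in>{1..k}. h j \<noteq> 0" using False m by (auto simp: Z_def h_def)
    have himg: "h ` {1..k} = {1..int k}"
    proof
      show "h ` {1..k} \<subseteq> {1..int k}"
      proof
        fix y assume "y \<in> h ` {1..k}"
        then obtain j where j: "j \<in> {1..k}" "y = h j" by blast
        have "0 \<le> y" "y < P" using j P1 by (auto simp: h_def)
        moreover have "y \<noteq> 0" using h0 j by auto
        ultimately show "y \<in> {1..int k}" by (auto simp: P_def)
      qed
      show "{1..int k} \<subseteq> h ` {1..k}"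
      proof
        fix c assume c: "c \<in> {1..int k}"
        have "\<forall>j\<in>{1..k}. (v j - int j * int m) mod P \<noteq> 0" using h0 by (simp add: h_def)
        then obtain j where "j \<in> {1..k}" "(v j - int j * int m) mod P = c"
          using key[of c "int m"] c by auto
        thus "c \<in> h ` {1..k}" by (auto simp: h_def)
      qed
    qed
    have "card (h ` {1..k}) = card {1..k}" using himg by simp
    hence hinj: "inj_on h {1..k}" by (rule eq_card_imp_inj_on[rotated]) simp
    have "[poly Q (int m) = (\<Prod>j\<in>{1..k}. h j)] (mod P)"
      unfolding polyQ h_def by (rule cong_prod) (simp add: cong_def)
    also have "(\<Prod>j\<in>{1..k}. h j) = (\<Prod>c\<in>h ` {1..k}. c)" using hinj by (simp add: prod.reindex)
    also have "\<dots> = (\<Prod>c\<in>int ` {1..k}. c)" using himg by (simp add: image_int_atLeastAtMost)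
    also have "\<dots> = (\<Prod>j\<in>{1..k}. int j)" by (simp add: prod.reindex)
    also have "\<dots> = fact k" by (simp add: fact_prod)
    finally show ?thesis using fk False cong_trans by simp
  qed
  have "[(\<Sum>m<p. poly Q (int m)) = (\<Sum>m<p. (if m \<in> Z then 0 else -1))] (mod P)"
    by (rule cong_sum) (use each in auto)
  also have "(\<Sum>m<p. (if m \<in> Z then 0 else -1::int)) = - int (card ({..<p} - Z))"
    by (simp add: sum.If_cases Diff_eq)
  also have "card ({..<p} - Z) = p - card Z"
  proof -
    have "Z \<subseteq> {..<p}" by (auto simp: Z_def)
    moreover from this have "finite Z" by (rule finite_subset) simp
    ultimately show ?thesis by (simp add: card_Diff_subset)
  qed
  finally have "[- int (p - card Z) = 1] (mod P)" using S2 cong_sym cong_trans by blast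
  moreover have Zfin: "finite Z" by (auto simp: Z_def)
  moreover have "card Z \<le> p" using card_mono[of "{..<p}" Z] by (auto simp: Z_def)
  ultimately have "[int (card Z) - int p = 1] (mod P)" by (simp add: of_nat_diff)
  hence "[int (card Z) = 1] (mod P)" unfolding Pp by (simp add: cong_def mod_diff_right_eq[symmetric])
  hence dZ: "P dvd int (card Z) - 1" by (simp add: cong_iff_dvd_diff cong_sym_eq)
  have "0 \<in> Z" using a unfolding Z_def p_def by force
  moreover obtain m0 where m0: "m0 \<in> Z" "m0 \<noteq> 0"
  proof -
    have "coprime (int b) P" using notdvd[OF b(1)] prime_imp_coprime[OF pP] coprime_commute by blast
    then obtain bi where bi: "[int b * bi = 1] (mod P)" using cong_solve_coprime_int by blast
    define m0 where "m0 = nat ((v b * bi) mod P)"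
    have im0: "int m0 = (v b * bi) mod P" using P1 by (simp add: m0_def)
    have "int m0 < P" using P1 im0 by simp
    hence "m0 < p" using Pp by linarith
    have "[int b * int m0 = int b * (v b * bi)] (mod P)" unfolding im0 by (simp add: cong_def mod_mult_right_eq)
    also have "int b * (v b * bi) = v b * (int b * bi)" by simp
    also have "[\<dots> = v b * 1] (mod P)" by (rule cong_mult[OF cong_refl bi])
    finally have cb: "[int b * int m0 = v b] (mod P)" by simp
    hence "[v b = int b * int m0] (mod P)" by (rule cong_sym)
    hence "P dvd v b - int b * int m0" by (simp add: cong_iff_dvd_diff)
    hence "(v b - int b * int m0) mod P = 0" by simp
    hence "m0 \<in> Z" using b(1) \<open>m0 < p\<close> unfolding Z_def mem_Collect_eq lessThan_iff
      by (intro conjI bexI[of _ b]) simp_all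
    moreover have "m0 \<noteq> 0"
    proof
      assume "m0 = 0"
      hence "[v b = 0] (mod P)" using cb cong_sym by fastforce
      hence "P dvd v b" by (simp add: cong_0_iff)
      moreover have "0 \<le> v b \<and> v b \<le> int k" using vr b(1) by blast
      hence "0 < v b" "v b < P" using b(2) by (auto simp: P_def)
      ultimately show False using zdvd_imp_le by fastforce
    qed
    ultimately show ?thesis using that by blast
  qed
  ultimately have "{0, m0} \<subseteq> Z" by auto
  hence cZ2: "2 \<le> card Z" using Zfin m0(2) card_mono[of Z "{0, m0}"] by auto
  define J where "J m = (SOME j. j \<in> {1..k} \<and> (v j - int j * int m) mod P = 0)" for m
  have J: "J m \<in> {1..k} \<and> (v (J m) - int (J m) * int m) mod P = 0" if "m \<in> Z" for m
    unfolding J_def by (rule someI_ex) (use that in \<open>auto simp: Z_def\<close>)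
  have "inj_on J Z"
  proof
    fix m1 m2 assume m: "m1 \<in> Z" "m2 \<in> Z" "J m1 = J m2"
    define j where "j = J m1"
    have j: "j \<in> {1..k}" using J[OF m(1)] by (simp add: j_def)
    have "P dvd v j - int j * int m1" using J[OF m(1)] by (simp add: j_def dvd_eq_mod_eq_0)
    moreover have "P dvd v j - int j * int m2" using J[OF m(2)] m(3) by (simp add: j_def dvd_eq_mod_eq_0)
    ultimately have "P dvd (v j - int j * int m2) - (v j - int j * int m1)" by (rule dvd_diff[rotated])
    also have "(v j - int j * int m2) - (v j - int j * int m1) = int j * (int m1 - int m2)"
      by (simp add: algebra_simps)
    finally have "P dvd int j * (int m1 - int m2)" .
    hence d: "P dvd int m1 - int m2" using notdvd[OF j] pP prime_dvd_mult_iff by blast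
    have "int m1 < P" "int m2 < P" using m by (auto simp: Z_def Pp)
    hence lt: "\<bar>int m1 - int m2\<bar> < P" by linarith
    show "m1 = m2"
    proof (rule ccontr)
      assume "m1 \<noteq> m2"
      hence "int m1 - int m2 \<noteq> 0" by simp
      from dvd_imp_le_int[OF this d] lt P1 show False by simp
    qed
  qed
  moreover have "J ` Z \<subseteq> {1..k}" using J by auto
  ultimately have "card Z \<le> k" using card_inj_on_le[of J Z "{1..k}"] by auto
  hence "int (card Z) - 1 < P" "0 < int (card Z) - 1" using cZ2 by (auto simp: P_def)
  thus False using dZ zdvd_imp_le by fastforce
qed

end
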